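(* There is an absolute constant $c>0$ such that for every connected graph $G$ with $n\ge 2$ nodes and every $\epsilon\in(0,1)$, $$t_{\epsilon,1}(G)\;\ge\;\frac{1-\epsilon}{2\log 2}\,n\log n\;-\;c\,n .$$
   Context: Let $G=(V,E)$ be a finite, undirected, connected graph with $V=\{1,\dots,n\}$. The averaging process on $G$: the state vector $v(t)\in\mathbb R^n$, $t=0,1,2,\dots$, starts from a given $v(0)$; at each step $t\ge 1$ an edge $\{i,j\}\in E$ is chosen uniformly at random (independently of all previous choices) and both $v_i$ and $v_j$ are replaced by $(v_i+v_j)/2$, all other coordinates unchanged. Let $\bar v=(a,\dots,a)^T$ with $a=\frac1n\sum_i v_i(0)$. For $p,q\ge1$ and $\epsilon>0$, $t_{\epsilon,p\to q}(G)$ is the least $t\in\mathbb N$ such that for every $v(0)$ with $\|v(0)\|_p=1$ one has $\left(\mathbb E\|v(t)-\bar v\|_q^q\right)^{1/q}\le\epsilon$; $t_{\epsilon,1}=t_{\epsilon,1\to1}$. Logarithms are natural. *)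

theory Defs
  imports Complex_Main
begin

definition is_graph :: "nat \<Rightarrow> nat set set \<Rightarrow> bool" where
  "is_graph n E \<longleftrightarrow> E \<subseteq> {{i, j} | i j. i \<in> {1..n} \<and> j \<in> {1..n} \<and> i \<noteq> j}"

definition adj_rel :: "nat set set \<Rightarrow> (nat \<times> nat) set" where
  "adj_rel E = {(i, j). {i, j} \<in> E}"

definition graph_connected :: "nat \<Rightarrow> nat set set \<Rightarrow> bool" where
  "graph_connected n E \<longleftrightarrow> (\<forall>i\<in>{1..n}. \<forall>j\<in>{1..n}. (i, j) \<in> (adj_rel E)\<^sup>*)"

definition avg_step :: "nat set \<Rightarrow> (nat \<Rightarrow> real) \<Rightarrow> (nat \<Rightarrow> real)" where
  "avg_step e v = (\<lambda>k. if k \<in> e then (\<Sum>l\<in>e. v l) / 2 else v k)"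

definition run_avg :: "nat set list \<Rightarrow> (nat \<Rightarrow> real) \<Rightarrow> (nat \<Rightarrow> real)" where
  "run_avg es v0 = foldl (\<lambda>v e. avg_step e v) v0 es"

definition mean_vec :: "nat \<Rightarrow> (nat \<Rightarrow> real) \<Rightarrow> real" where
  "mean_vec n v = (\<Sum>i\<in>{1..n}. v i) / real n"

definition l1_norm :: "nat \<Rightarrow> (nat \<Rightarrow> real) \<Rightarrow> real" where
  "l1_norm n v = (\<Sum>i\<in>{1..n}. \<bar>v i\<bar>)"

text \<open>E ||v(t) - vbar||_1, the expectation over t independent uniform edge choices
  (all edge sequences of length t equally likely).\<close>
definition expected_l1_dist :: "nat \<Rightarrow> nat set set \<Rightarrow> nat \<Rightarrow> (nat \<Rightarrow> real) \<Rightarrow> real" where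
  "expected_l1_dist n E t v0 =
     (\<Sum>es\<in>{es. set es \<subseteq> E \<and> length es = t}.
        l1_norm n (\<lambda>i. run_avg es v0 i - mean_vec n v0)) / real (card E) ^ t"

definition t_eps1 :: "nat \<Rightarrow> nat set set \<Rightarrow> real \<Rightarrow> nat" where
  "t_eps1 n E \<epsilon> = (LEAST t. \<forall>v0. l1_norm n v0 = 1 \<longrightarrow> expected_l1_dist n E t v0 \<le> \<epsilon>)"

end

theory Submission
  imports Defs
begin


lemma edge_form:
  assumes "is_graph n E" "e \<in> E"
  shows "\<exists>a b. e = {a,b} \<and> a \<noteq> b \<and> a \<in> {1..n} \<and> b \<in> {1..n}"
  using assms unfolding is_graph_def by blast

lemma finite_E: assumes "is_graph n E" shows "finite E"
proof -
  have "E \<subseteq> (\<lambda>(i,j). {i,j}) ` ({1..n} \<times> {1..n})"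
  proof
    fix x assume "x \<in> E"
    then obtain a b where "x = {a,b}" "a \<in> {1..n}" "b \<in> {1..n}" using edge_form[OF assms] by blast
    then show "x \<in> (\<lambda>(i,j). {i,j}) ` ({1..n} \<times> {1..n})" by force
  qed
  then show ?thesis by (rule finite_subset) auto
qed

lemma avg_step_pair:
  assumes "a \<noteq> b"
  shows "avg_step {a,b} v = (\<lambda>k. if k = a \<or> k = b then (v a + v b)/2 else v k)"
  using assms unfolding avg_step_def by (auto intro!: ext)

lemma sum_two:
  assumes "finite V" "a \<in> V" "b \<in> V" "a \<noteq> b"
  shows "sum f V = f a + f b + sum f (V - {a,b})"
proof -
  have "sum f V = sum f (V - {a,b}) + sum f {a,b}"
    using assms by (intro sum.subset_diff) auto
  then show ?thesis using assms by (simp add: add.commute)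
qed

lemma run_Cons: "run_avg (e#es) v = run_avg es (avg_step e v)"
  by (simp add: run_avg_def)

lemma run_snoc: "run_avg (es@[e]) v = avg_step e (run_avg es v)"
  by (simp add: run_avg_def)

lemma run_Nil: "run_avg [] v = v" by (simp add: run_avg_def)

lemma sum_lists_Suc:
  assumes "finite E"
  shows "(\<Sum>es\<in>{es. set es \<subseteq> E \<and> length es = Suc t}. g es)
       = (\<Sum>e\<in>E. \<Sum>es\<in>{es. set es \<subseteq> E \<and> length es = t}. g (e#es))"
proof -
  have inj: "inj_on (\<lambda>(xs, n). n#xs) ({xs. set xs \<subseteq> E \<and> length xs = t} \<times> E)"
    by (auto simp: inj_on_def)
  have "(\<Sum>es\<in>{es. set es \<subseteq> E \<and> length es = Suc t}. g es)
      = (\<Sum>p\<in>{xs. set xs \<subseteq> E \<and> length xs = t} \<times> E. g (snd p # fst p))"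
    unfolding lists_length_Suc_eq by (subst sum.reindex[OF inj]) (simp add: case_prod_beta)
  also have "\<dots> = (\<Sum>es\<in>{xs. set xs \<subseteq> E \<and> length xs = t}. \<Sum>e\<in>E. g (e#es))"
    by (simp add: sum.cartesian_product split_beta)
  also have "\<dots> = (\<Sum>e\<in>E. \<Sum>es\<in>{es. set es \<subseteq> E \<and> length es = t}. g (e#es))"
    by (rule sum.swap)
  finally show ?thesis .
qed

lemma step_linear:
  assumes "finite e"
  shows "avg_step e (\<lambda>k. \<Sum>j\<in>J. f j k) = (\<lambda>k. \<Sum>j\<in>J. avg_step e (f j) k)"
  unfolding avg_step_def
  by (auto intro!: ext simp: sum.swap[of _ e J] sum_divide_distrib)

lemma run_linear:
  assumes "\<forall>e\<in>set es. finite e"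
  shows "run_avg es (\<lambda>k. \<Sum>j\<in>J. f j k) = (\<lambda>k. \<Sum>j\<in>J. run_avg es (f j) k)"
  using assms
proof (induction es arbitrary: f)
  case Nil then show ?case by (simp add: run_Nil)
next
  case (Cons e es)
  have "run_avg (e#es) (\<lambda>k. \<Sum>j\<in>J. f j k) = run_avg es (\<lambda>k. \<Sum>j\<in>J. avg_step e (f j) k)"
    using Cons.prems by (simp add: run_Cons step_linear)
  also have "\<dots> = (\<lambda>k. \<Sum>j\<in>J. run_avg es (avg_step e (f j)) k)"
    using Cons by simp
  finally show ?case by (simp add: run_Cons)
qed

lemma run_shift:
  assumes "\<forall>e\<in>set es. card e = 2"
  shows "run_avg es (\<lambda>k. v k - m) = (\<lambda>k. run_avg es v k - m)"
  using assms
proof (induction es arbitrary: v)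
  case Nil then show ?case by (simp add: run_Nil)
next
  case (Cons e es)
  have fe: "finite e" using Cons.prems by (auto intro: card_ge_0_finite)
  have "avg_step e (\<lambda>k. v k - m) = (\<lambda>k. avg_step e v k - m)"
    using Cons.prems fe unfolding avg_step_def by (auto intro!: ext simp: sum_subtractf field_simps)
  then show ?case using Cons by (simp add: run_Cons)
qed



definition ent :: "nat \<Rightarrow> (nat \<Rightarrow> real) \<Rightarrow> real" where
  "ent n p = (\<Sum>i\<in>{1..n}. - (p i * ln (p i)))"

lemma xlnx_mono: fixes a c :: real assumes "0 \<le> a" "a \<le> c" shows "a * ln a \<le> a * ln c"
proof (cases "a = 0")
  case False
  then have "ln a \<le> ln c" using assms by (intro ln_mono) auto
  then show ?thesis using assms by (intro mult_left_mono) auto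
qed simp

lemma merge_ineq:
  fixes a b :: real assumes "0 \<le> a" "0 \<le> b"
  shows "- (2 * (((a+b)/2) * ln ((a+b)/2))) \<le> - (a * ln a) - (b * ln b) + (a+b) * ln 2"
proof (cases "a + b = 0")
  case True then have "a = 0" "b = 0" using assms by auto
  then show ?thesis by simp
next
  case False
  then have pos: "a + b > 0" using assms by simp
  have l: "ln ((a+b)/2) = ln (a+b) - ln 2" using pos by (simp add: ln_div)
  have eq: "- (2 * (((a+b)/2) * ln ((a+b)/2))) = - ((a+b) * ln (a+b)) + (a+b) * ln 2"
    unfolding l by (simp add: field_simps)
  have "a * ln a \<le> a * ln (a+b)" using assms by (intro xlnx_mono) auto
  moreover have "b * ln b \<le> b * ln (a+b)" using assms by (intro xlnx_mono) auto
  ultimately show ?thesis unfolding eq by (simp add: algebra_simps)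
qed

lemma ent_step:
  assumes "a \<noteq> b" "a \<in> {1..n}" "b \<in> {1..n}" "0 \<le> p a" "0 \<le> p b"
  shows "ent n (avg_step {a,b} p) \<le> ent n p + ln 2 * (p a + p b)"
proof -
  let ?q = "avg_step {a,b} p"
  let ?f = "\<lambda>p i. - (p i * ln (p i))"
  have qa: "?q a = (p a + p b)/2" "?q b = (p a + p b)/2"
    using assms by (auto simp: avg_step_pair)
  have rest: "sum (?f ?q) ({1..n} - {a,b}) = sum (?f p) ({1..n} - {a,b})"
    using assms by (intro sum.cong) (auto simp: avg_step_pair)
  have "ent n ?q = ?f ?q a + ?f ?q b + sum (?f ?q) ({1..n} - {a,b})"
    unfolding ent_def using assms by (intro sum_two) auto
  also have "\<dots> = - (2 * (((p a + p b)/2) * ln ((p a + p b)/2))) + sum (?f p) ({1..n} - {a,b})"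
    by (simp only: qa rest)
  also have "\<dots> \<le> ?f p a + ?f p b + sum (?f p) ({1..n} - {a,b}) + ln 2 * (p a + p b)"
    using merge_ineq[OF assms(4,5)] by (simp add: algebra_simps)
  also have "?f p a + ?f p b + sum (?f p) ({1..n} - {a,b}) = ent n p"
    unfolding ent_def using assms by (intro sum_two[symmetric]) auto
  finally show ?thesis .
qed

definition ind :: "nat \<Rightarrow> nat \<Rightarrow> real" where "ind j = (\<lambda>i. if i = j then 1 else 0)"

lemma run_bounds:
  assumes "is_graph n E" "set es \<subseteq> E" "\<forall>k. 0 \<le> v k \<and> v k \<le> 1"
  shows "\<forall>k. 0 \<le> run_avg es v k \<and> run_avg es v k \<le> 1"
  using assms(2,3)
proof (induction es arbitrary: v)
  case Nil then show ?case by (simp add: run_Nil)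
next
  case (Cons e es)
  obtain a b where e: "e = {a,b}" "a \<noteq> b" using edge_form[OF assms(1)] Cons.prems by force
  have "v a \<le> 1" "v b \<le> 1" using Cons.prems by auto
  then have "v a + v b \<le> 2" by simp
  then have "\<forall>k. 0 \<le> avg_step e v k \<and> avg_step e v k \<le> 1"
    using Cons.prems e by (auto simp: avg_step_pair)
  then show ?case using Cons by (simp add: run_Cons)
qed

lemma run_ones:
  assumes "is_graph n E" "set es \<subseteq> E"
  shows "run_avg es (\<lambda>k. if k \<in> {1..n} then 1 else 0) = (\<lambda>k. if k \<in> {1..n} then 1 else 0)"
  using assms(2)
proof (induction es)
  case Nil then show ?case by (simp add: run_Nil)
next
  case (Cons e es)
  obtain a b where e: "e = {a,b}" "a \<noteq> b" "a \<in> {1..n}" "b \<in> {1..n}"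
    using edge_form[OF assms(1)] Cons.prems by force
  have "avg_step e (\<lambda>k. if k \<in> {1..n} then 1 else 0) = (\<lambda>k. if k \<in> {1..n} then 1 else 0)"
    using e by (auto simp: avg_step_pair intro!: ext)
  then show ?case using Cons by (simp add: run_Cons)
qed

lemma col_sum:
  assumes "is_graph n E" "set es \<subseteq> E" "i \<in> {1..n}"
  shows "(\<Sum>j\<in>{1..n}. run_avg es (ind j) i) = 1"
proof -
  have fin: "\<forall>e\<in>set es. finite e"
    using assms(1,2) edge_form by blast
  have "(\<lambda>k. \<Sum>j\<in>{1..n}. ind j k) = (\<lambda>k. if k \<in> {1..n} then 1 else 0)"
    by (auto intro!: ext simp: ind_def)
  then have "(\<lambda>k. \<Sum>j\<in>{1..n}. run_avg es (ind j) k) = (\<lambda>k. if k \<in> {1..n} then 1 else 0)"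
    using run_linear[OF fin, of "\<lambda>j. ind j" "{1..n}"] run_ones[OF assms(1,2)] by simp
  then show ?thesis using assms(3) by (metis (mono_tags, lifting))
qed

lemma ent_ind: "ent n (ind j) = 0"
  unfolding ent_def ind_def by (intro sum.neutral) auto

lemma ent_total:
  assumes "is_graph n E" "set es \<subseteq> E"
  shows "(\<Sum>j\<in>{1..n}. ent n (run_avg es (ind j))) \<le> 2 * ln 2 * length es"
  using assms(2)
proof (induction es rule: rev_induct)
  case Nil then show ?case by (simp add: run_Nil ent_ind)
next
  case (snoc e es)
  obtain a b where e: "e = {a,b}" "a \<noteq> b" "a \<in> {1..n}" "b \<in> {1..n}"
    using edge_form[OF assms(1)] snoc.prems by force
  have ses: "set es \<subseteq> E" using snoc.prems by simp
  have nn: "\<And>j k. 0 \<le> run_avg es (ind j) k"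
    using run_bounds[OF assms(1) ses, of "ind _"] by (auto simp: ind_def)
  have "(\<Sum>j\<in>{1..n}. ent n (run_avg (es@[e]) (ind j)))
     \<le> (\<Sum>j\<in>{1..n}. ent n (run_avg es (ind j)) + ln 2 * (run_avg es (ind j) a + run_avg es (ind j) b))"
    unfolding run_snoc e(1) using e nn by (intro sum_mono ent_step) auto
  also have "\<dots> = (\<Sum>j\<in>{1..n}. ent n (run_avg es (ind j))) + ln 2 * ((\<Sum>j\<in>{1..n}. run_avg es (ind j) a) + (\<Sum>j\<in>{1..n}. run_avg es (ind j) b))"
    by (simp add: sum.distrib sum_distrib_left distrib_left)
  also have "\<dots> = (\<Sum>j\<in>{1..n}. ent n (run_avg es (ind j))) + 2 * ln 2"
    using col_sum[OF assms(1) ses] e by simp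
  also have "\<dots> \<le> 2 * ln 2 * length es + 2 * ln 2"
    using snoc.IH ses by simp
  finally show ?case by (simp add: algebra_simps)
qed



lemma point_ineq:
  fixes p :: real and n :: nat
  assumes n: "n \<ge> 2" and p: "0 \<le> p" "p \<le> 1"
  shows "(1/n - \<bar>p - 1/n\<bar>) * ln n - 2 * ln 2 / n \<le> - (p * ln p)"
proof -
  have npos: "real n > 0" using n by simp
  have lnn: "ln (real n) \<ge> 0" using n by simp
  have ln2: "ln (2::real) > 0" by simp
  have c2: "0 \<le> 2 * ln 2 / real n" using npos ln2 by simp
  consider "p = 0" | "0 < p" "p \<le> 1/n" | "1/n < p" "p < 2/n" | "2/n \<le> p" using p by linarith
  then show ?thesis
  proof cases
    case 1 then show ?thesis using c2 by simp
  next
    case 2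
    have "ln n \<le> ln (1/p)" using 2 npos by (intro ln_mono) (auto simp: field_simps)
    then have "ln n \<le> - ln p" using 2 by (simp add: ln_div)
    then have "p * ln n \<le> - (p * ln p)" using 2 by (metis minus_mult_right mult_left_mono less_imp_le)
    moreover have "\<bar>p - 1/n\<bar> = 1/n - p" using 2 by simp
    then have "(1/n - \<bar>p - 1/n\<bar>) * ln n = p * ln n" by simp
    ultimately show ?thesis using c2 by linarith
  next
    case 3
    have "ln p \<le> ln (2/n)" using 3 by (intro ln_mono) auto
    then have "ln p \<le> ln 2 - ln n" using npos by (simp add: ln_div)
    then have a: "p * (ln n - ln 2) \<le> - (p * ln p)" using 3 npos
      by (metis diff_le_eq le_diff_eq minus_diff_eq minus_mult_right mult_left_mono less_imp_le order_trans
          divide_pos_pos zero_less_one neg_le_iff_le)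
    have b: "\<bar>p - 1/n\<bar> = p - 1/n" using 3 by simp
    have "(2/n - p) * ln n \<le> p * ln n" using 3 lnn by (intro mult_right_mono) auto
    moreover have "p * ln 2 \<le> (2/n) * ln 2" using 3 ln2 by (intro mult_right_mono) auto
    ultimately show ?thesis using a b by (simp add: algebra_simps)
  next
    case 4
    have "ln p \<le> 0" using 4 p npos by (subst ln_le_zero_iff) (auto intro: order_less_le_trans[of 0 "2/n"])
    then have "0 \<le> - (p * ln p)" using p by (simp add: mult_nonneg_nonpos)
    moreover have "(2/n - p) * ln n \<le> 0" using 4 lnn by (intro mult_nonpos_nonneg) auto
    moreover have "\<bar>p - 1/n\<bar> = p - 1/n" using 4 npos by (simp add: field_simps)
    then have "(1/n - \<bar>p - 1/n\<bar>) * ln n = (2/n - p) * ln n" by (simp add: algebra_simps)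
    ultimately show ?thesis using c2 by linarith
  qed
qed


lemma ent_lower:
  assumes n: "n \<ge> 2" and p: "\<forall>i. 0 \<le> p i \<and> p i \<le> 1"
  shows "(1 - (\<Sum>i\<in>{1..n}. \<bar>p i - 1/n\<bar>)) * ln n - 2 * ln 2 \<le> ent n p"
proof -
  have npos: "real n > 0" using n by simp
  have "(\<Sum>i\<in>{1..n}. (1/n - \<bar>p i - 1/n\<bar>) * ln n - 2 * ln 2 / n) \<le> ent n p"
    unfolding ent_def using n p by (intro sum_mono point_ineq) auto
  moreover have "(\<Sum>i\<in>{1..n}. (1/n - \<bar>p i - 1/n\<bar>) * ln n - 2 * ln 2 / n)
      = (1 - (\<Sum>i\<in>{1..n}. \<bar>p i - 1/n\<bar>)) * ln n - 2 * ln 2"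
    using npos by (simp add: sum_subtractf sum_distrib_right[symmetric] left_diff_distrib)
  ultimately show ?thesis by simp
qed
lemma mean_ind: assumes "j \<in> {1..n}" shows "mean_vec n (ind j) = 1 / real n"
proof -
  have "(\<Sum>i\<in>{1..n}. ind j i) = 1" using assms by (simp add: ind_def)
  then show ?thesis by (simp add: mean_vec_def)
qed

lemma l1_ind: assumes "j \<in> {1..n}" shows "l1_norm n (ind j) = 1"
  using assms by (simp add: l1_norm_def ind_def)

lemma lower_main:
  assumes g: "is_graph n E" and n: "n \<ge> 2" and ne: "E \<noteq> {}"
    and good: "\<forall>j\<in>{1..n}. expected_l1_dist n E t (ind j) \<le> \<epsilon>"
  shows "real n * (1 - \<epsilon>) * ln n - 2 * n * ln 2 \<le> 2 * ln 2 * t"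
proof -
  define L where "L = {es. set es \<subseteq> E \<and> length es = t}"
  have fE: "finite E" using finite_E[OF g] .
  have fL: "finite L" unfolding L_def using finite_lists_length_eq[OF fE] .
  have cL: "real (card L) = real (card E) ^ t" unfolding L_def using card_lists_length_eq[OF fE] by simp
  have cEpos: "real (card E) > 0" using fE ne by (simp add: card_gt_0_iff)
  have Npos: "real (card L) > 0" using cL cEpos by simp
  define \<delta> where "\<delta> j es = l1_norm n (\<lambda>i. run_avg es (ind j) i - mean_vec n (ind j))" for j es
  have D: "expected_l1_dist n E t (ind j) = (\<Sum>es\<in>L. \<delta> j es) / card L" for j
    unfolding expected_l1_dist_def \<delta>_def L_def by (simp add: card_lists_length_eq[OF fE])
  have lnn: "ln (real n) \<ge> 0" using n by simp
  have per: "real n * ln n - ln n * (\<Sum>j\<in>{1..n}. \<delta> j es) - 2 * n * ln 2 \<le> 2 * ln 2 * t"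
    if es: "es \<in> L" for es
  proof -
    have ses: "set es \<subseteq> E" and len: "length es = t" using es unfolding L_def by auto
    have "(\<Sum>j\<in>{1..n}. (1 - \<delta> j es) * ln n - 2 * ln 2) \<le> (\<Sum>j\<in>{1..n}. ent n (run_avg es (ind j)))"
    proof (intro sum_mono)
      fix j assume j: "j \<in> {1..n}"
      have b: "\<forall>i. 0 \<le> run_avg es (ind j) i \<and> run_avg es (ind j) i \<le> 1"
        by (rule run_bounds[OF g ses]) (simp add: ind_def)
      show "(1 - \<delta> j es) * ln n - 2 * ln 2 \<le> ent n (run_avg es (ind j))"
        using ent_lower[OF n b] unfolding \<delta>_def l1_norm_def mean_ind[OF j] .
    qed
    also have "\<dots> \<le> 2 * ln 2 * t" using ent_total[OF g ses] len by simp
    finally have "(\<Sum>j\<in>{1..n}. (1 - \<delta> j es) * ln n - 2 * ln 2) \<le> 2 * ln 2 * t" .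
    moreover have "(\<Sum>j\<in>{1..n}. (1 - \<delta> j es) * ln n - 2 * ln 2)
        = real n * ln n - ln n * (\<Sum>j\<in>{1..n}. \<delta> j es) - 2 * n * ln 2"
      by (simp add: sum_subtractf sum_distrib_left left_diff_distrib algebra_simps sum.distrib)
    ultimately show ?thesis by simp
  qed
  define A where "A = real n * ln n - 2 * n * ln 2"
  define S where "S es = (\<Sum>j\<in>{1..n}. \<delta> j es)" for es
  have per': "A - ln n * S es \<le> 2 * ln 2 * t" if "es \<in> L" for es
    using per[OF that] unfolding A_def S_def by linarith
  have "(\<Sum>es\<in>L. A - ln n * S es) \<le> (\<Sum>es\<in>L. 2 * ln 2 * t)"
    using per' by (intro sum_mono) auto
  moreover have "(\<Sum>es\<in>L. A - ln n * S es) = card L * A - ln n * (\<Sum>es\<in>L. S es)"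
    by (simp add: sum_subtractf sum_distrib_left)
  moreover have "(\<Sum>es\<in>L. S es) = (\<Sum>j\<in>{1..n}. \<Sum>es\<in>L. \<delta> j es)"
    unfolding S_def by (rule sum.swap)
  moreover have "(\<Sum>j\<in>{1..n}. \<Sum>es\<in>L. \<delta> j es) \<le> (\<Sum>j\<in>{1..n}. card L * \<epsilon>)"
  proof (intro sum_mono)
    fix j assume j: "j \<in> {1..n}"
    have "(\<Sum>es\<in>L. \<delta> j es) / card L \<le> \<epsilon>" using good j D by simp
    then show "(\<Sum>es\<in>L. \<delta> j es) \<le> card L * \<epsilon>" using Npos by (simp add: divide_le_eq mult.commute)
  qed
  moreover have "(\<Sum>j\<in>{1..n}. card L * \<epsilon>) = n * (card L * \<epsilon>)" by simp
  moreover have "(\<Sum>es\<in>L. 2 * ln 2 * t) = card L * (2 * ln 2 * t)" by simp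
  ultimately have "card L * A - ln n * (\<Sum>j\<in>{1..n}. \<Sum>es\<in>L. \<delta> j es) \<le> card L * (2 * ln 2 * t)
    \<and> (\<Sum>j\<in>{1..n}. \<Sum>es\<in>L. \<delta> j es) \<le> n * (card L * \<epsilon>)"
    by (smt (verit))
  then have c1: "card L * A - ln n * (\<Sum>j\<in>{1..n}. \<Sum>es\<in>L. \<delta> j es) \<le> card L * (2 * ln 2 * t)"
    and c2: "(\<Sum>j\<in>{1..n}. \<Sum>es\<in>L. \<delta> j es) \<le> n * (card L * \<epsilon>)" by auto
  have "ln n * (\<Sum>j\<in>{1..n}. \<Sum>es\<in>L. \<delta> j es) \<le> ln n * (n * (card L * \<epsilon>))"
    using c2 lnn by (rule mult_left_mono)
  with c1 have "card L * A - ln n * (n * (card L * \<epsilon>)) \<le> card L * (2 * ln 2 * t)"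
    by linarith
  then have "card L * (real n * (1 - \<epsilon>) * ln n - 2 * n * ln 2) \<le> card L * (2 * ln 2 * t)"
    unfolding A_def by (simp add: algebra_simps)
  then show ?thesis using Npos by simp
qed



definition sq :: "nat \<Rightarrow> (nat \<Rightarrow> real) \<Rightarrow> real" where
  "sq n w = (\<Sum>i\<in>{1..n}. (w i)^2)"

lemma sq_step:
  assumes "a \<noteq> b" "a \<in> {1..n}" "b \<in> {1..n}"
  shows "sq n (avg_step {a,b} w) = sq n w - (w a - w b)^2 / 2"
proof -
  let ?q = "avg_step {a,b} w"
  have rest: "(\<Sum>i\<in>{1..n} - {a,b}. (?q i)^2) = (\<Sum>i\<in>{1..n} - {a,b}. (w i)^2)"
    using assms by (intro sum.cong) (auto simp: avg_step_pair)
  have "sq n ?q = (?q a)^2 + (?q b)^2 + (\<Sum>i\<in>{1..n} - {a,b}. (?q i)^2)"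
    unfolding sq_def using assms by (intro sum_two) auto
  also have "\<dots> = 2 * ((w a + w b)/2)^2 + (\<Sum>i\<in>{1..n} - {a,b}. (w i)^2)"
    using assms rest by (simp add: avg_step_pair)
  also have "(\<Sum>i\<in>{1..n} - {a,b}. (w i)^2) = sq n w - (w a)^2 - (w b)^2"
    unfolding sq_def using sum_two[of "{1..n}" a b "\<lambda>i. (w i)^2"] assms by simp
  finally show ?thesis by (simp add: power2_eq_square field_simps)
qed

lemma sum_step:
  assumes "a \<noteq> b" "a \<in> {1..n}" "b \<in> {1..n}"
  shows "(\<Sum>i\<in>{1..n}. avg_step {a,b} w i) = (\<Sum>i\<in>{1..n}. w i)"
proof -
  let ?q = "avg_step {a,b} w"
  have rest: "(\<Sum>i\<in>{1..n} - {a,b}. ?q i) = (\<Sum>i\<in>{1..n} - {a,b}. w i)"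
    using assms by (intro sum.cong) (auto simp: avg_step_pair)
  have "(\<Sum>i\<in>{1..n}. ?q i) = ?q a + ?q b + (\<Sum>i\<in>{1..n} - {a,b}. ?q i)"
    using assms by (intro sum_two) auto
  also have "\<dots> = w a + w b + (\<Sum>i\<in>{1..n} - {a,b}. w i)"
    using assms rest by (simp add: avg_step_pair)
  also have "\<dots> = (\<Sum>i\<in>{1..n}. w i)"
    using assms by (intro sum_two[symmetric]) auto
  finally show ?thesis .
qed

lemma finite_bound:
  assumes "finite A" "\<forall>x\<in>A. \<exists>k::nat. P x k"
  shows "\<exists>K. \<forall>x\<in>A. \<exists>k\<le>K. P x k"
  using assms
proof (induction A rule: finite_induct)
  case empty then show ?case by simp
next
  case (insert x A)
  then obtain K where K: "\<forall>y\<in>A. \<exists>k\<le>K. P y k" by auto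
  obtain k where k: "P x k" using insert.prems by auto
  show ?case
  proof (rule exI[of _ "max K k"], intro ballI)
    fix y assume "y \<in> insert x A"
    then show "\<exists>k'\<le>max K k. P y k'"
    proof (cases "y = x")
      case True then show ?thesis using k by (intro exI[of _ k]) auto
    next
      case False
      with \<open>y \<in> insert x A\<close> have "y \<in> A" by simp
      then obtain k' where "k' \<le> K" "P y k'" using K by auto
      then show ?thesis by (intro exI[of _ k']) auto
    qed
  qed
qed

lemma adj_edge:
  assumes "is_graph n E" "(c, b) \<in> adj_rel E"
  shows "{c,b} \<in> E \<and> c \<noteq> b \<and> c \<in> {1..n} \<and> b \<in> {1..n}"
proof -
  have e: "{c,b} \<in> E" using assms(2) by (simp add: adj_rel_def)
  obtain x y where "{c,b} = {x,y}" "x \<noteq> y" "x \<in> {1..n}" "y \<in> {1..n}"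
    using edge_form[OF assms(1) e] by blast
  then show ?thesis using e by (auto simp: doubleton_eq_iff)
qed

lemma path_bound:
  assumes g: "is_graph n E" and p: "(a, b) \<in> (adj_rel E) ^^ k"
    and S: "\<And>c d. {c,d} \<in> E \<Longrightarrow> c \<noteq> d \<Longrightarrow> (w c - w d)^2 \<le> s"
  shows "\<bar>w a - w b\<bar> \<le> k * sqrt s"
  using p
proof (induction k arbitrary: b)
  case 0 then show ?case by simp
next
  case (Suc k)
  then obtain c where c1: "(a, c) \<in> (adj_rel E) ^^ k" and c2: "(c, b) \<in> adj_rel E" by auto
  have e: "{c,b} \<in> E" "c \<noteq> b" using adj_edge[OF g c2] by auto
  have "(w c - w b)^2 \<le> s" using S[OF e] .
  then have "sqrt ((w c - w b)^2) \<le> sqrt s" by (rule real_sqrt_le_mono)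
  then have "\<bar>w c - w b\<bar> \<le> sqrt s" by simp
  moreover have "\<bar>w a - w c\<bar> \<le> k * sqrt s" using Suc.IH[OF c1] .
  ultimately have "\<bar>w a - w b\<bar> \<le> k * sqrt s + sqrt s" by linarith
  then show ?case by (simp add: algebra_simps)
qed

lemma pair_sum_identity:
  fixes w :: "nat \<Rightarrow> real"
  assumes "(\<Sum>i\<in>{1..n}. w i) = 0"
  shows "(\<Sum>a\<in>{1..n}. \<Sum>b\<in>{1..n}. (w a - w b)^2) = 2 * n * sq n w"
proof -
  have "(\<Sum>a\<in>{1..n}. \<Sum>b\<in>{1..n}. (w a - w b)^2)
     = (\<Sum>a\<in>{1..n}. \<Sum>b\<in>{1..n}. (w a)^2 + (w b)^2 - 2 * w a * w b)"
    by (simp add: power2_diff)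
  also have "\<dots> = (\<Sum>a\<in>{1..n}. n * (w a)^2 + sq n w - 2 * w a * (\<Sum>b\<in>{1..n}. w b))"
    by (simp add: sum.distrib sum_subtractf sum_distrib_left sq_def mult.assoc)
  also have "\<dots> = (\<Sum>a\<in>{1..n}. n * (w a)^2 + sq n w)"
    using assms by simp
  also have "\<dots> = 2 * n * sq n w"
    by (simp add: sum.distrib sum_distrib_left[symmetric] sq_def)
  finally show ?thesis by simp
qed

lemma delta_nonneg:
  assumes g: "is_graph n E" and e: "e \<in> E"
  shows "sq n (avg_step e w) \<le> sq n w"
proof -
  obtain a b where "e = {a,b}" "a \<noteq> b" "a \<in> {1..n}" "b \<in> {1..n}" using edge_form[OF g e] by blast
  then show ?thesis using sq_step[of a b n w] by simp
qed

lemma poincare: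
  assumes g: "is_graph n E" and c: "graph_connected n E" and n: "n \<ge> 1"
  shows "\<exists>C\<ge>1. \<forall>w. (\<Sum>i\<in>{1..n}. w i) = 0 \<longrightarrow>
           sq n w \<le> C * (\<Sum>e\<in>E. sq n w - sq n (avg_step e w))"
proof -
  have "\<forall>x\<in>{1..n} \<times> {1..n}. \<exists>k. x \<in> (adj_rel E) ^^ k"
    using c unfolding graph_connected_def by (auto simp: rtrancl_power[symmetric])
  from finite_bound[OF _ this] obtain K where K: "\<forall>x\<in>{1..n} \<times> {1..n}. \<exists>k\<le>K. x \<in> (adj_rel E) ^^ k"
    by blast
  have fE: "finite E" using finite_E[OF g] .
  show ?thesis
  proof (rule exI[of _ "real n * (real K)^2 + 1"], intro conjI allI impI)
    show "1 \<le> real n * (real K)^2 + 1" by simp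
    fix w :: "nat \<Rightarrow> real" assume w0: "(\<Sum>i\<in>{1..n}. w i) = 0"
    define S where "S = (\<Sum>e\<in>E. sq n w - sq n (avg_step e w))"
    have Snn: "S \<ge> 0" unfolding S_def using delta_nonneg[OF g] by (intro sum_nonneg) auto
    have edge: "(w c - w d)^2 \<le> 2 * S" if cd: "{c,d} \<in> E" "c \<noteq> d" for c d
    proof -
      have cd': "c \<in> {1..n}" "d \<in> {1..n}" using adj_edge[OF g, of c d] cd by (auto simp: adj_rel_def)
      have "sq n w - sq n (avg_step {c,d} w) \<le> S"
        unfolding S_def using fE cd delta_nonneg[OF g]
        by (intro member_le_sum[where f = "\<lambda>e. sq n w - sq n (avg_step e w)"]) auto
      then show ?thesis using sq_step[OF cd(2) cd'] by simp
    qed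
    have pair: "(w a - w b)^2 \<le> (real K)^2 * (2 * S)" if ab: "a \<in> {1..n}" "b \<in> {1..n}" for a b
    proof -
      obtain k where k: "k \<le> K" "(a,b) \<in> (adj_rel E) ^^ k" using K ab by blast
      have "\<bar>w a - w b\<bar> \<le> k * sqrt (2*S)" using path_bound[OF g k(2), of w "2*S"] edge by blast
      also have "\<dots> \<le> K * sqrt (2*S)" using k(1) Snn by (intro mult_right_mono) auto
      finally have "\<bar>w a - w b\<bar>^2 \<le> (K * sqrt (2*S))^2" by (intro power_mono) auto
      then show ?thesis using Snn by (simp add: power_mult_distrib)
    qed
    have "2 * n * sq n w = (\<Sum>a\<in>{1..n}. \<Sum>b\<in>{1..n}. (w a - w b)^2)"
      using pair_sum_identity[OF w0] by simp
    also have "\<dots> \<le> (\<Sum>a\<in>{1..n}. \<Sum>b\<in>{1..n}. (real K)^2 * (2 * S))"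
      using pair by (intro sum_mono) auto
    also have "\<dots> = 2 * n * (n * (real K)^2 * S)" by (simp add: algebra_simps power2_eq_square)
    finally have "sq n w \<le> n * (real K)^2 * S" using n by simp
    also have "\<dots> \<le> (n * (real K)^2 + 1) * S" using Snn by (simp add: algebra_simps)
    finally show "sq n w \<le> (n * (real K)^2 + 1) * (\<Sum>e\<in>E. sq n w - sq n (avg_step e w))"
      unfolding S_def .
  qed
qed

lemma sum_zero_step:
  assumes g: "is_graph n E" "e \<in> E" and w: "(\<Sum>i\<in>{1..n}. w i) = 0"
  shows "(\<Sum>i\<in>{1..n}. avg_step e w i) = 0"
proof -
  obtain a b where "e = {a,b}" "a \<noteq> b" "a \<in> {1..n}" "b \<in> {1..n}" using edge_form[OF g] by blast
  then show ?thesis using sum_step[of a b n w] w by simp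
qed

lemma Q_bound:
  assumes g: "is_graph n E" and ne: "E \<noteq> {}" and C: "C \<ge> 1"
    and P: "\<forall>w. (\<Sum>i\<in>{1..n}. w i) = 0 \<longrightarrow> sq n w \<le> C * (\<Sum>e\<in>E. sq n w - sq n (avg_step e w))"
  shows "(\<Sum>i\<in>{1..n}. w i) = 0 \<Longrightarrow>
    (\<Sum>es\<in>{es. set es \<subseteq> E \<and> length es = t}. sq n (run_avg es w)) / real (card E) ^ t
      \<le> (1 - 1 / (C * card E)) ^ t * sq n w"
proof (induction t arbitrary: w)
  case 0
  have "{es. set es \<subseteq> E \<and> length es = 0} = {[]}" by auto
  then show ?case by (simp add: run_Nil)
next
  case (Suc t)
  have fE: "finite E" using finite_E[OF g] .
  have cE1: "real (card E) \<ge> 1" using fE ne by (simp add: Suc_leI card_gt_0_iff)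
  have cE: "real (card E) > 0" using cE1 by simp
  define \<rho> where "\<rho> = 1 - 1 / (C * card E)"
  have "C * card E \<ge> 1" using C cE1 by (metis mult_mono' mult_1 zero_le_one)
  then have \<rho>0: "\<rho> \<ge> 0" unfolding \<rho>_def by simp
  define L where "L = {es. set es \<subseteq> E \<and> length es = t}"
  define S where "S = (\<Sum>e\<in>E. sq n w - sq n (avg_step e w))"
  have "(\<Sum>es\<in>{es. set es \<subseteq> E \<and> length es = Suc t}. sq n (run_avg es w))
      = (\<Sum>e\<in>E. \<Sum>es\<in>L. sq n (run_avg es (avg_step e w)))"
    unfolding L_def by (simp add: sum_lists_Suc[OF fE] run_Cons)
  then have "(\<Sum>es\<in>{es. set es \<subseteq> E \<and> length es = Suc t}. sq n (run_avg es w)) / real (card E) ^ Suc t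
      = (\<Sum>e\<in>E. (\<Sum>es\<in>L. sq n (run_avg es (avg_step e w))) / real (card E) ^ t) / card E"
    by (simp add: sum_divide_distrib field_simps)
  also have "\<dots> \<le> (\<Sum>e\<in>E. \<rho> ^ t * sq n (avg_step e w)) / card E"
    using cE Suc.IH sum_zero_step[OF g _ Suc.prems] unfolding L_def \<rho>_def
    by (intro divide_right_mono sum_mono) auto
  also have "\<dots> = \<rho> ^ t * ((card E * sq n w - S) / card E)"
    unfolding S_def by (simp add: sum_distrib_left[symmetric] sum_subtractf)
  also have "\<dots> \<le> \<rho> ^ t * (\<rho> * sq n w)"
  proof (intro mult_left_mono)
    have "sq n w \<le> C * S" using P Suc.prems unfolding S_def by blast
    then have "sq n w / C \<le> S" using C by (simp add: field_simps)
    then have "(card E * sq n w - S) / card E \<le> (card E * sq n w - sq n w / C) / card E"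
      using cE by (intro divide_right_mono) auto
    also have "\<dots> = \<rho> * sq n w" unfolding \<rho>_def using cE C by (simp add: field_simps)
    finally show "(card E * sq n w - S) / card E \<le> \<rho> * sq n w" .
    show "0 \<le> \<rho> ^ t" using \<rho>0 by simp
  qed
  finally show ?case unfolding \<rho>_def by (simp add: mult_ac)
qed


lemma abs_le_quad:
  fixes y a :: real assumes "a > 0"
  shows "\<bar>y\<bar> \<le> y^2 / (2*a) + a/2"
proof -
  have "0 \<le> (\<bar>y\<bar> - a)^2" by simp
  then have "2 * a * \<bar>y\<bar> \<le> y^2 + a^2" by (simp add: power2_diff power2_abs algebra_simps)
  then show ?thesis using assms by (simp add: field_simps power2_eq_square)
qed

lemma E_nonempty:
  assumes c: "graph_connected n E" and n: "n \<ge> 2"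
  shows "E \<noteq> {}"
proof
  assume "E = {}"
  then have "adj_rel E = {}" by (simp add: adj_rel_def)
  moreover have "(1, 2) \<in> (adj_rel E)\<^sup>*" using c n unfolding graph_connected_def by auto
  ultimately show False by simp
qed

lemma exists_good:
  assumes g: "is_graph n E" and c: "graph_connected n E" and n: "n \<ge> 2" and eps: "\<epsilon> > 0"
  shows "\<exists>t. \<forall>v0. l1_norm n v0 = 1 \<longrightarrow> expected_l1_dist n E t v0 \<le> \<epsilon>"
proof -
  have ne: "E \<noteq> {}" using E_nonempty[OF c n] .
  have fE: "finite E" using finite_E[OF g] .
  have cE1: "real (card E) \<ge> 1" using fE ne by (simp add: Suc_leI card_gt_0_iff)
  have cE: "real (card E) > 0" using cE1 by simp
  have npos: "real n > 0" using n by simp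
  obtain C where C: "C \<ge> 1" and P: "\<forall>w. (\<Sum>i\<in>{1..n}. w i) = 0 \<longrightarrow>
           sq n w \<le> C * (\<Sum>e\<in>E. sq n w - sq n (avg_step e w))"
    using poincare[OF g c] n by auto
  define \<rho> where "\<rho> = 1 - 1 / (C * card E)"
  have "C * card E \<ge> 1" using C cE1 by (metis mult_mono' mult_1 zero_le_one)
  then have \<rho>1: "\<rho> < 1" and \<rho>0: "\<rho> \<ge> 0" unfolding \<rho>_def by auto
  obtain t where t: "\<rho> ^ t < \<epsilon>^2 / (4 * n)" using real_arch_pow_inv[OF _ \<rho>1, of "\<epsilon>^2 / (4 * n)"] eps npos by auto
  show ?thesis
  proof (intro exI[of _ t] allI impI)
    fix v0 :: "nat \<Rightarrow> real" assume l1: "l1_norm n v0 = 1"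
    define m where "m = mean_vec n v0"
    define w where "w = (\<lambda>k. v0 k - m)"
    define L where "L = {es. set es \<subseteq> E \<and> length es = t}"
    have cL: "real (card L) = real (card E) ^ t" unfolding L_def by (simp add: card_lists_length_eq[OF fE])
    have w0: "(\<Sum>i\<in>{1..n}. w i) = 0"
      unfolding w_def m_def mean_vec_def using npos by (simp add: sum_subtractf)
    have sh: "run_avg es v0 i - m = run_avg es w i" if "es \<in> L" for es i
    proof -
      have "\<forall>e\<in>set es. card e = 2"
      proof
        fix e assume "e \<in> set es"
        then have "e \<in> E" using that unfolding L_def by auto
        then obtain a b where "e = {a,b}" "a \<noteq> b" using edge_form[OF g] by blast
        then show "card e = 2" by simp
      qed
      then show ?thesis unfolding w_def using run_shift by metis
    qed
    have pt: "l1_norm n x \<le> n / (2 * \<epsilon>) * sq n x + \<epsilon> / 2" for x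
    proof -
      have "l1_norm n x \<le> (\<Sum>i\<in>{1..n}. (x i)^2 / (2 * (\<epsilon>/n)) + (\<epsilon>/n)/2)"
        unfolding l1_norm_def using eps npos by (intro sum_mono abs_le_quad) auto
      also have "\<dots> = n / (2 * \<epsilon>) * sq n x + \<epsilon> / 2"
        unfolding sq_def using npos eps by (simp add: sum.distrib sum_divide_distrib[symmetric] sum_distrib_left[symmetric] field_simps)
      finally show ?thesis .
    qed
    have "expected_l1_dist n E t v0 = (\<Sum>es\<in>L. l1_norm n (run_avg es w)) / real (card E) ^ t"
      unfolding expected_l1_dist_def L_def[symmetric] m_def[symmetric]
      using sh by (intro arg_cong[where f = "\<lambda>x. x / _"] sum.cong) (auto simp: l1_norm_def)
    also have "\<dots> \<le> (\<Sum>es\<in>L. n / (2 * \<epsilon>) * sq n (run_avg es w) + \<epsilon> / 2) / real (card E) ^ t"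
      using cE by (intro divide_right_mono sum_mono pt) auto
    also have "\<dots> = n / (2 * \<epsilon>) * ((\<Sum>es\<in>L. sq n (run_avg es w)) / real (card E) ^ t) + \<epsilon> / 2"
    proof -
      have "(\<Sum>es\<in>L. n / (2 * \<epsilon>) * sq n (run_avg es w) + \<epsilon> / 2)
          = n / (2 * \<epsilon>) * (\<Sum>es\<in>L. sq n (run_avg es w)) + card L * (\<epsilon> / 2)"
        by (simp only: sum.distrib sum_distrib_left[symmetric] sum_constant)
      then show ?thesis using cE cL by (simp add: add_divide_distrib)
    qed
    also have "\<dots> \<le> n / (2 * \<epsilon>) * (\<rho> ^ t * sq n w) + \<epsilon> / 2"
      using Q_bound[OF g ne C P w0, of t] eps npos unfolding L_def \<rho>_def
      by (intro add_right_mono mult_left_mono) auto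
    also have "\<dots> \<le> \<epsilon>"
    proof -
      have bv: "\<bar>v0 i\<bar> \<le> 1" if "i \<in> {1..n}" for i
        using l1 that unfolding l1_norm_def by (metis finite_atLeastAtMost member_le_sum abs_ge_zero)
      have "\<bar>m\<bar> * n = \<bar>\<Sum>i\<in>{1..n}. v0 i\<bar>" unfolding m_def mean_vec_def using npos by (simp add: abs_div)
      also have "\<dots> \<le> 1" using l1 unfolding l1_norm_def by (metis sum_abs)
      finally have mn: "\<bar>m\<bar> * n \<le> 1" .
      then have m1: "\<bar>m\<bar> \<le> 1" using n by (smt (verit) mult_le_cancel_left1 of_nat_1 of_nat_mono one_le_numeral order_trans mult.commute)
      have "sq n w \<le> (\<Sum>i\<in>{1..n}. 2 * (\<bar>v0 i\<bar> + \<bar>m\<bar>))"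
        unfolding sq_def w_def
      proof (intro sum_mono)
        fix i assume i: "i \<in> {1..n}"
        have a: "\<bar>v0 i - m\<bar> \<le> \<bar>v0 i\<bar> + \<bar>m\<bar>" by simp
        have b: "\<bar>v0 i - m\<bar> \<le> 2" using bv[OF i] m1 by simp
        have "(v0 i - m)^2 = \<bar>v0 i - m\<bar> * \<bar>v0 i - m\<bar>" by (simp add: power2_eq_square)
        also have "\<dots> \<le> 2 * \<bar>v0 i - m\<bar>" using b by (intro mult_right_mono) auto
        also have "\<dots> \<le> 2 * (\<bar>v0 i\<bar> + \<bar>m\<bar>)" using a by simp
        finally show "(v0 i - m)^2 \<le> 2 * (\<bar>v0 i\<bar> + \<bar>m\<bar>)" .
      qed
      also have "\<dots> = 2 * (l1_norm n v0 + \<bar>m\<bar> * n)" unfolding l1_norm_def by (simp add: sum.distrib sum_distrib_left)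
      also have "\<dots> \<le> 4" using l1 mn by simp
      finally have sq4: "sq n w \<le> 4" .
      have sqnn: "sq n w \<ge> 0" unfolding sq_def by (simp add: sum_nonneg)
      have "\<rho> ^ t * sq n w \<le> \<epsilon>^2 / (4 * n) * 4"
        using t sq4 sqnn \<rho>0 by (intro mult_mono) auto
      then have "n / (2 * \<epsilon>) * (\<rho> ^ t * sq n w) \<le> n / (2 * \<epsilon>) * (\<epsilon>^2 / (4 * n) * 4)"
        using eps npos by (intro mult_left_mono) auto
      also have "\<dots> = \<epsilon> / 2" using eps npos by (simp add: field_simps power2_eq_square)
      finally have "n / (2 * \<epsilon>) * (\<rho> ^ t * sq n w) \<le> \<epsilon> / 2" .
      then show ?thesis by linarith
    qed
    finally show "expected_l1_dist n E t v0 \<le> \<epsilon>" .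
  qed
qed


theorem theorem1:
  "\<exists>c>0. \<forall>n::nat. \<forall>E. n \<ge> 2 \<longrightarrow> is_graph n E \<longrightarrow> graph_connected n E \<longrightarrow>
     (\<forall>\<epsilon>::real. 0 < \<epsilon> \<and> \<epsilon> < 1 \<longrightarrow>
        real (t_eps1 n E \<epsilon>) \<ge> (1 - \<epsilon>) / (2 * ln 2) * real n * ln (real n) - c * real n)"
proof (rule exI[of _ 1], intro conjI allI impI)
  show "(0::real) < 1" by simp
  fix n :: nat and E :: "nat set set" and \<epsilon> :: real
  assume n: "n \<ge> 2" and g: "is_graph n E" and c: "graph_connected n E" and eps: "0 < \<epsilon> \<and> \<epsilon> < 1"
  define P where "P t = (\<forall>v0. l1_norm n v0 = 1 \<longrightarrow> expected_l1_dist n E t v0 \<le> \<epsilon>)" for t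
  obtain t0 where "P t0" using exists_good[OF g c n] eps unfolding P_def by auto
  then have PT: "P (t_eps1 n E \<epsilon>)" unfolding t_eps1_def P_def[symmetric] by (rule LeastI)
  have "\<forall>j\<in>{1..n}. expected_l1_dist n E (t_eps1 n E \<epsilon>) (ind j) \<le> \<epsilon>"
    using PT l1_ind unfolding P_def by blast
  from lower_main[OF g n E_nonempty[OF c n] this]
  have key: "real n * (1 - \<epsilon>) * ln n - 2 * n * ln 2 \<le> 2 * ln 2 * t_eps1 n E \<epsilon>" by simp
  have ln2: "ln (2::real) > 0" by simp
  have "(1 - \<epsilon>) / (2 * ln 2) * real n * ln (real n) - 1 * real n
      = (real n * (1 - \<epsilon>) * ln n - 2 * n * ln 2) / (2 * ln 2)"
    using ln2 by (simp add: field_simps)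
  also have "\<dots> \<le> (2 * ln 2 * t_eps1 n E \<epsilon>) / (2 * ln 2)"
    using key ln2 by (intro divide_right_mono) auto
  also have "\<dots> = t_eps1 n E \<epsilon>" using ln2 by simp
  finally show "(1 - \<epsilon>) / (2 * ln 2) * real n * ln (real n) - 1 * real n \<le> real (t_eps1 n E \<epsilon>)" .
qed

end
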